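(* Let $f$ be a norm on $\mathbb{R}^n$, $g$ a norm on $\mathbb{R}^m$, let $\lambda_1,\lambda_2,\alpha_{\bm{x}},\alpha_{\bm{v}}>0$, and let $C>0$ be an absolute constant. Define the cone $$\mathcal{C}(\lambda_1,\lambda_2)=\big\{(\bm{a},\bm{b})\in\mathbb{R}^n\times\mathbb{R}^m:\lambda_1f(\bm{a})+\lambda_2g(\bm{b})\le C\lambda_1\alpha_{\bm{x}}\|\bm{a}\|_2+C\lambda_2\alpha_{\bm{v}}\|\bm{b}\|_2\big\}$$ and $\mathcal{C}^*=\mathcal{C}(\lambda_1,\lambda_2)\cap\mathbb{S}^{n+m-1}$. Then $$\omega(\mathcal{C}^* )\lesssim\Big(\alpha_{\bm{x}}+\frac{\lambda_2\alpha_{\bm{v}}}{\lambda_1}\Big)\omega(\mathbb{B}_f^n)+\Big(\alpha_{\bm{v}}+\frac{\lambda_1\alpha_{\bm{x}}}{\lambda_2}\Big)\omega(\mathbb{B}_g^m).$$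
   Context: $\mathbb{B}_f^n=\{\bm{x}\in\mathbb{R}^n:f(\bm{x})\le1\}$, $\mathbb{B}_g^m$ similarly; $\mathbb{S}^{p-1}$ the Euclidean unit sphere. Gaussian width $\omega(\mathcal{K})=\mathbb{E}\sup_{\bm{x}\in\mathcal{K}}\langle\bm{g},\bm{x}\rangle$, $\bm{g}$ standard Gaussian. $A\lesssim B$ means $A\le C'B$ for an absolute constant $C'$. *)

theory Defs
  imports "HOL-Probability.Probability"
begin

text \<open>Vectors of R^n are represented as functions nat => real vanishing outside {..<n}.\<close>

definition vecs :: "nat \<Rightarrow> (nat \<Rightarrow> real) set" where
  "vecs n = {x. \<forall>i\<ge>n. x i = 0}"

definition l2 :: "nat \<Rightarrow> (nat \<Rightarrow> real) \<Rightarrow> real" where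
  "l2 n x = sqrt (\<Sum>i<n. (x i)\<^sup>2)"

definition is_norm_on :: "nat \<Rightarrow> ((nat \<Rightarrow> real) \<Rightarrow> real) \<Rightarrow> bool" where
  "is_norm_on n f \<longleftrightarrow>
     (\<forall>x\<in>vecs n. 0 \<le> f x \<and> (f x = 0 \<longleftrightarrow> x = (\<lambda>_. 0))) \<and>
     (\<forall>x\<in>vecs n. \<forall>c. f (\<lambda>i. c * x i) = \<bar>c\<bar> * f x) \<and>
     (\<forall>x\<in>vecs n. \<forall>y\<in>vecs n. f (\<lambda>i. x i + y i) \<le> f x + f y)"

definition norm_ball :: "nat \<Rightarrow> ((nat \<Rightarrow> real) \<Rightarrow> real) \<Rightarrow> (nat \<Rightarrow> real) set" where
  "norm_ball n f = {x \<in> vecs n. f x \<le> 1}"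

definition gauss :: "nat \<Rightarrow> (nat \<Rightarrow> real) measure" where
  "gauss n = PiM {..<n} (\<lambda>_. density lborel std_normal_density)"

text \<open>Gaussian width E sup_{x in K} <g,x>. Convention: the empty set gets width 0
  (mathematically -infinity).\<close>
definition gaussian_width :: "nat \<Rightarrow> (nat \<Rightarrow> real) set \<Rightarrow> real" where
  "gaussian_width n K =
     (if K = {} then 0 else
      integral\<^sup>L (gauss n) (\<lambda>g. SUP x\<in>K. \<Sum>i<n. g i * x i))"

text \<open>Identification of R^n x R^m with R^(n+m).\<close>
definition concat_vec :: "nat \<Rightarrow> (nat \<Rightarrow> real) \<Rightarrow> (nat \<Rightarrow> real) \<Rightarrow> (nat \<Rightarrow> real)" where
  "concat_vec n a b = (\<lambda>i. if i < n then a i else b (i - n))"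

definition cone_sphere ::
  "nat \<Rightarrow> nat \<Rightarrow> ((nat \<Rightarrow> real) \<Rightarrow> real) \<Rightarrow> ((nat \<Rightarrow> real) \<Rightarrow> real) \<Rightarrow>
   real \<Rightarrow> real \<Rightarrow> real \<Rightarrow> real \<Rightarrow> real \<Rightarrow> (nat \<Rightarrow> real) set" where
  "cone_sphere n m f g C lam1 lam2 ax av =
     {concat_vec n a b | a b. a \<in> vecs n \<and> b \<in> vecs m \<and>
        lam1 * f a + lam2 * g b \<le> C * lam1 * ax * l2 n a + C * lam2 * av * l2 m b \<and>
        (l2 n a)\<^sup>2 + (l2 m b)\<^sup>2 = 1}"

end

theory Submission
  imports Defs
begin



definition l1 :: "nat \<Rightarrow> (nat \<Rightarrow> real) \<Rightarrow> real" where
  "l1 n x = (\<Sum>i<n. \<bar>x i\<bar>)"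

definition ev :: "nat \<Rightarrow> nat \<Rightarrow> real" where
  "ev k = (\<lambda>j. if j = k then 1 else 0)"

lemma norm_props:
  assumes "is_norm_on n f"
  shows "\<And>x. x \<in> vecs n \<Longrightarrow> 0 \<le> f x"
    and "\<And>x. x \<in> vecs n \<Longrightarrow> f x = 0 \<longleftrightarrow> x = (\<lambda>_. 0)"
    and "\<And>x c. x \<in> vecs n \<Longrightarrow> f (\<lambda>i. c * x i) = \<bar>c\<bar> * f x"
    and "\<And>x y. x \<in> vecs n \<Longrightarrow> y \<in> vecs n \<Longrightarrow> f (\<lambda>i. x i + y i) \<le> f x + f y"
  using assms unfolding is_norm_on_def by blast+

lemma trunc_bound:
  assumes N: "is_norm_on n f" and x: "x \<in> vecs n" and k: "k \<le> n"
  shows "f (\<lambda>j. if j < k then x j else 0) \<le> (\<Sum>i<k. \<bar>x i\<bar> * f (ev i))"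
  using k
proof (induction k)
  case 0
  have "(\<lambda>_. 0::real) \<in> vecs n" by (simp add: vecs_def)
  then have "f (\<lambda>_. 0) = 0" using norm_props(2)[OF N] by blast
  then show ?case by simp
next
  case (Suc k)
  let ?y = "\<lambda>j. if j < k then x j else 0"
  let ?z = "\<lambda>j. x k * ev k j"
  have yv: "?y \<in> vecs n" using Suc.prems x by (auto simp: vecs_def)
  have ev: "ev k \<in> vecs n" using Suc.prems by (auto simp: vecs_def ev_def)
  have eq: "(\<lambda>j. if j < Suc k then x j else 0) = (\<lambda>j. ?y j + ?z j)"
    by (rule ext) (auto simp: ev_def less_Suc_eq)
  have "f (\<lambda>j. ?y j + ?z j) \<le> f ?y + f ?z"
    using norm_props(4)[OF N yv] ev by (auto simp: vecs_def)
  also have "f ?z = \<bar>x k\<bar> * f (ev k)" using norm_props(3)[OF N ev] by simp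
  finally show ?case using Suc by (simp add: eq)
qed

definition Mf :: "nat \<Rightarrow> ((nat \<Rightarrow> real) \<Rightarrow> real) \<Rightarrow> real" where
  "Mf n f = (\<Sum>i<n. f (ev i))"

lemma Mf_nonneg:
  assumes N: "is_norm_on n f"
  shows "0 \<le> Mf n f"
  unfolding Mf_def by (rule sum_nonneg) (use norm_props(1)[OF N] in \<open>auto simp: vecs_def ev_def\<close>)

lemma upper_bound:
  assumes N: "is_norm_on n f" and x: "x \<in> vecs n"
  shows "f x \<le> Mf n f * l1 n x"
proof -
  have "x = (\<lambda>j. if j < n then x j else 0)" using x by (auto simp: vecs_def)
  then have "f x \<le> (\<Sum>i<n. \<bar>x i\<bar> * f (ev i))" using trunc_bound[OF N x order_refl] by simp
  also have "\<dots> \<le> (\<Sum>i<n. \<bar>x i\<bar> * Mf n f)"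
  proof (rule sum_mono)
    fix i assume i: "i \<in> {..<n}"
    have "f (ev i) \<le> Mf n f" unfolding Mf_def
      by (rule member_le_sum) (use i norm_props(1)[OF N] in \<open>auto simp: vecs_def ev_def\<close>)
    then show "\<bar>x i\<bar> * f (ev i) \<le> \<bar>x i\<bar> * Mf n f" by (simp add: mult_left_mono)
  qed
  also have "\<dots> = Mf n f * l1 n x" by (simp add: l1_def sum_distrib_left sum_distrib_right mult.commute)
  finally show ?thesis .
qed

lemma diff_bound:
  assumes N: "is_norm_on n f" and x: "x \<in> vecs n" and y: "y \<in> vecs n"
  shows "\<bar>f x - f y\<bar> \<le> Mf n f * (\<Sum>i<n. \<bar>x i - y i\<bar>)"
proof -
  have d1: "(\<lambda>i. x i - y i) \<in> vecs n" and d2: "(\<lambda>i. y i - x i) \<in> vecs n"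
    using x y by (auto simp: vecs_def)
  have "f x \<le> f y + f (\<lambda>i. x i - y i)"
    using norm_props(4)[OF N y d1] by simp
  moreover have "f y \<le> f x + f (\<lambda>i. y i - x i)"
    using norm_props(4)[OF N x d2] by simp
  moreover have "f (\<lambda>i. y i - x i) = f (\<lambda>i. x i - y i)"
    using norm_props(3)[OF N d1, of "-1"] by simp
  moreover have "f (\<lambda>i. x i - y i) \<le> Mf n f * (\<Sum>i<n. \<bar>x i - y i\<bar>)"
    using upper_bound[OF N d1] by (simp add: l1_def)
  ultimately show ?thesis by linarith
qed


lemma cont_l1: "continuous_on UNIV (\<lambda>x::nat\<Rightarrow>real. \<Sum>i<n. \<bar>x i - y i\<bar>)"
  by (intro continuous_intros continuous_on_product_coordinates)

lemma cont_ip: "continuous_on UNIV (\<lambda>x::nat\<Rightarrow>real. \<Sum>i<n. g i * x i)"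
  by (intro continuous_intros continuous_on_product_coordinates)

lemma compact_box:
  "compact {x::nat\<Rightarrow>real. \<forall>i. x i \<in> (if i < n then {-1..1} else {0})}"
proof -
  let ?S = "\<lambda>i::nat. if i < n then {-1..1::real} else {0}"
  have eq: "{x::nat\<Rightarrow>real. \<forall>i. x i \<in> ?S i} = PiE UNIV ?S"
    by (auto simp: PiE_def Pi_def)
  have "compactin (product_topology (\<lambda>i. euclidean) UNIV) (PiE UNIV ?S)"
    by (subst compactin_PiE) auto
  then show ?thesis unfolding eq euclidean_product_topology compactin_euclidean_iff .
qed

lemma lower_bound:
  assumes N: "is_norm_on n f"
  shows "\<exists>c>0. \<forall>x\<in>vecs n. c * l1 n x \<le> f x"
proof (cases "n = 0")
  case True
  then show ?thesis using norm_props(1)[OF N] by (auto simp: l1_def intro!: exI[of _ 1])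
next
  case False
  define S where "S = {x::nat\<Rightarrow>real. \<forall>i. x i \<in> (if i < n then {-1..1} else {0})} \<inter> {x. l1 n x = 1}"
  have cl: "closed {x::nat\<Rightarrow>real. l1 n x = 1}"
  proof -
    have "continuous_on UNIV (l1 n)"
      using cont_l1[where n=n and y="\<lambda>_. 0"] by (simp add: l1_def[abs_def])
    then show ?thesis using closed_Collect_eq[OF _ continuous_on_const, of "l1 n" 1] by simp
  qed
  have cS: "compact S" unfolding S_def using compact_box cl by blast
  have Sv: "S \<subseteq> vecs n"
  proof
    fix x assume "x \<in> S"
    then have "\<forall>i. x i \<in> (if i < n then {-1..1} else {0})" by (simp add: S_def)
    then have "\<forall>i\<ge>n. x i = 0" by (metis not_le singletonD)
    then show "x \<in> vecs n" by (simp add: vecs_def)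
  qed
  have e0: "ev 0 \<in> S"
  proof -
    have "l1 n (ev 0) = 1" using False by (simp add: l1_def ev_def sum.If_cases)
    moreover have "\<forall>i. ev 0 i \<in> (if i < n then {-1..1} else {0})" using False by (auto simp: ev_def)
    ultimately show ?thesis by (simp add: S_def)
  qed
  have cont: "continuous_on S f"
    unfolding continuous_on_def
  proof
    fix y assume yS: "y \<in> S"
    let ?L = "\<lambda>x. \<Sum>i<n. \<bar>x i - y i\<bar>"
    have "isCont ?L y" using cont_l1[where n=n and y=y] continuous_on_eq_continuous_at open_UNIV by blast
    then have "(?L \<longlongrightarrow> ?L y) (at y within S)"
      unfolding isCont_def by (rule tendsto_within_subset) simp
    then have L0: "((\<lambda>x. Mf n f * ?L x) \<longlongrightarrow> 0) (at y within S)"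
      using tendsto_mult_right_zero by fastforce
    have "eventually (\<lambda>x. norm (f x - f y) \<le> norm (Mf n f * ?L x) * 1) (at y within S)"
    proof -
      have "\<forall>x\<in>S. norm (f x - f y) \<le> norm (Mf n f * ?L x) * 1"
        using diff_bound[OF N] Sv yS Mf_nonneg[OF N] by (auto simp: abs_mult)
      then show ?thesis by (simp add: eventually_at_filter)
    qed
    from tendsto_0_le[OF L0 this] have "((\<lambda>x. f x - f y) \<longlongrightarrow> 0) (at y within S)" .
    then show "(f \<longlongrightarrow> f y) (at y within S)"
      using Lim_null by blast
  qed
  obtain x0 where x0: "x0 \<in> S" "\<And>y. y \<in> S \<Longrightarrow> f x0 \<le> f y"
    using continuous_attains_inf[OF cS _ cont] e0 by blast
  have "x0 \<noteq> (\<lambda>_. 0)" using x0(1) by (auto simp: S_def l1_def)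
  then have c0: "f x0 > 0" using norm_props(1,2)[OF N, of x0] x0(1) Sv by force
  show ?thesis
  proof (intro exI[of _ "f x0"] conjI c0 ballI)
    fix x assume xv: "x \<in> vecs n"
    show "f x0 * l1 n x \<le> f x"
    proof (cases "l1 n x = 0")
      case True then show ?thesis using norm_props(1)[OF N xv] by simp
    next
      case False
      have lpos: "l1 n x > 0" using False by (metis l1_def abs_ge_zero sum_nonneg order_le_less)
      define y where "y = (\<lambda>i. (1 / l1 n x) * x i)"
      have "y \<in> S"
      proof -
        have "\<bar>x i\<bar> \<le> l1 n x" if "i < n" for i
          unfolding l1_def by (rule member_le_sum) (use that in auto)
        then have "\<forall>i. y i \<in> (if i < n then {-1..1} else {0})"
          using xv lpos by (auto simp: y_def vecs_def abs_le_iff divide_le_eq le_divide_eq) (metis neg_le_iff_le minus_minus)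
        moreover have "l1 n y = 1" using lpos
          by (simp add: y_def l1_def abs_mult sum_divide_distrib[symmetric])
        ultimately show ?thesis by (simp add: S_def)
      qed
      then have "f x0 \<le> f y" by (rule x0(2))
      also have "f y = f x / l1 n x"
        using norm_props(3)[OF N xv, of "1 / l1 n x"] lpos by (simp add: y_def)
      finally show ?thesis using lpos by (simp add: le_divide_eq mult.commute)
    qed
  qed
qed


abbreviation NN :: "real measure" where "NN \<equiv> density lborel std_normal_density"

lemma probN: "prob_space NN"
  by (rule prob_space_normal_density) simp

lemma prob_gauss: "prob_space (gauss n)"
  unfolding gauss_def by (intro prob_space_PiM probN)

lemma intN: "integrable NN (\<lambda>x. \<bar>x\<bar>)"
proof -
  have "integrable lborel (\<lambda>x. std_normal_density x * \<bar>x\<bar> ^ 1)"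
    by (rule integrable_std_normal_moment_abs)
  then show ?thesis
    by (subst integrable_density) (auto simp: normal_density_nonneg)
qed

lemma int_comp:
  assumes "i < n"
  shows "integrable (gauss n) (\<lambda>g. \<bar>g i\<bar>)"
proof -
  have d: "distr (gauss n) NN (\<lambda>\<omega>. \<omega> i) = NN"
    unfolding gauss_def by (rule distr_PiM_component) (use assms probN in auto)
  have m: "(\<lambda>\<omega>. \<omega> i) \<in> measurable (gauss n) NN"
    unfolding gauss_def using assms by (intro measurable_component_singleton) auto
  show ?thesis
    using integrable_distr[OF m, of "\<lambda>x. \<bar>x\<bar>"] d intN by simp
qed

lemma int_G: "integrable (gauss n) (\<lambda>g. \<Sum>i<n. \<bar>g i\<bar>)"
  by (rule Bochner_Integration.integrable_sum[where f="\<lambda>i g. \<bar>g i\<bar>"]) (auto intro: int_comp)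

lemma meas_ip: "(\<lambda>g. \<Sum>i<n. g i * x i) \<in> borel_measurable (gauss n)"
proof -
  have "(\<lambda>g. g i) \<in> borel_measurable (gauss n)" if "i < n" for i
  proof -
    have m: "(\<lambda>\<omega>. \<omega> i) \<in> measurable (gauss n) NN"
      unfolding gauss_def using that by (intro measurable_component_singleton) auto
    have "measurable (gauss n) NN = measurable (gauss n) borel"
      by (rule measurable_cong_sets) auto
    then show ?thesis using m by simp
  qed
  then show ?thesis by (intro borel_measurable_sum borel_measurable_times) auto
qed


definition phi :: "nat \<Rightarrow> (nat \<Rightarrow> real) set \<Rightarrow> (nat \<Rightarrow> real) \<Rightarrow> real" where
  "phi n K g = (SUP x\<in>K. \<Sum>i<n. g i * x i)"

lemma ip_bound: "\<bar>\<Sum>i<n. g i * x i\<bar> \<le> (\<Sum>i<n. \<bar>g i\<bar>) * l1 n x"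
proof -
  have "\<bar>\<Sum>i<n. g i * x i\<bar> \<le> (\<Sum>i<n. \<bar>g i * x i\<bar>)" by (rule sum_abs)
  also have "\<dots> \<le> (\<Sum>i<n. \<bar>g i\<bar> * l1 n x)"
  proof (rule sum_mono)
    fix i assume i: "i \<in> {..<n}"
    have "\<bar>x i\<bar> \<le> l1 n x" unfolding l1_def by (rule member_le_sum) (use i in auto)
    then show "\<bar>g i * x i\<bar> \<le> \<bar>g i\<bar> * l1 n x" by (simp add: abs_mult mult_left_mono)
  qed
  also have "\<dots> = (\<Sum>i<n. \<bar>g i\<bar>) * l1 n x" by (simp add: sum_distrib_right)
  finally show ?thesis .
qed

lemma zero_in_ball:
  assumes N: "is_norm_on n f"
  shows "(\<lambda>_. 0) \<in> norm_ball n f"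
proof -
  have z: "(\<lambda>_. 0::real) \<in> vecs n" by (simp add: vecs_def)
  then have "f (\<lambda>_. 0) = 0" using norm_props(2)[OF N] by blast
  then show ?thesis using z by (simp add: norm_ball_def)
qed

lemma ball_bound:
  assumes N: "is_norm_on n f"
  obtains B where "B \<ge> 0" "\<And>x. x \<in> norm_ball n f \<Longrightarrow> l1 n x \<le> B"
proof -
  obtain c where c: "c > 0" "\<And>x. x \<in> vecs n \<Longrightarrow> c * l1 n x \<le> f x"
    using lower_bound[OF N] by blast
  show ?thesis
  proof (rule that[of "1 / c"])
    show "0 \<le> 1 / c" using c by simp
    fix x assume "x \<in> norm_ball n f"
    then have "x \<in> vecs n" "f x \<le> 1" by (auto simp: norm_ball_def)
    then have "c * l1 n x \<le> 1" using c(2)[of x] by linarith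
    then show "l1 n x \<le> 1 / c" using c(1) by (simp add: le_divide_eq mult.commute)
  qed
qed

lemma phi_props:
  assumes N: "is_norm_on n f"
  shows "\<exists>B. B \<ge> 0 \<and>
    (\<forall>g. bdd_above ((\<lambda>x. \<Sum>i<n. g i * x i) ` norm_ball n f)) \<and>
    (\<forall>g. 0 \<le> phi n (norm_ball n f) g) \<and>
    (\<forall>g. phi n (norm_ball n f) g \<le> B * (\<Sum>i<n. \<bar>g i\<bar>)) \<and>
    (\<forall>g x. x \<in> norm_ball n f \<longrightarrow> (\<Sum>i<n. g i * x i) \<le> phi n (norm_ball n f) g)"
proof -
  obtain B where B: "B \<ge> 0" "\<And>x. x \<in> norm_ball n f \<Longrightarrow> l1 n x \<le> B"
    using ball_bound[OF N] by blast
  have ub: "(\<Sum>i<n. g i * x i) \<le> B * (\<Sum>i<n. \<bar>g i\<bar>)" if "x \<in> norm_ball n f" for g x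
  proof -
    have "(\<Sum>i<n. g i * x i) \<le> (\<Sum>i<n. \<bar>g i\<bar>) * l1 n x" using ip_bound[where n=n and g=g and x=x] by linarith
    also have "\<dots> \<le> (\<Sum>i<n. \<bar>g i\<bar>) * B"
      by (rule mult_left_mono) (use B(2)[OF that] in \<open>auto intro: sum_nonneg\<close>)
    finally show ?thesis by (simp add: mult.commute)
  qed
  have bdd: "bdd_above ((\<lambda>x. \<Sum>i<n. g i * x i) ` norm_ball n f)" for g
    by (rule bdd_aboveI2) (erule ub)
  have ne: "norm_ball n f \<noteq> {}" using zero_in_ball[OF N] by blast
  have le: "(\<Sum>i<n. g i * x i) \<le> phi n (norm_ball n f) g" if "x \<in> norm_ball n f" for g x
    unfolding phi_def by (rule cSUP_upper[OF that bdd])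
  have z: "0 \<le> phi n (norm_ball n f) g" for g using le[OF zero_in_ball[OF N], of g] by simp
  have u: "phi n (norm_ball n f) g \<le> B * (\<Sum>i<n. \<bar>g i\<bar>)" for g
      unfolding phi_def by (rule cSUP_least[OF ne ub])
  show ?thesis
    apply (rule exI[of _ B])
    apply (intro conjI allI impI B(1) bdd z u)
    apply (erule le)
    done
qed

lemma phi_int:
  assumes N: "is_norm_on n f"
  shows "integrable (gauss n) (phi n (norm_ball n f))"
proof -
  obtain B where B: "B \<ge> 0 \<and>
    (\<forall>g. bdd_above ((\<lambda>x. \<Sum>i<n. g i * x i) ` norm_ball n f)) \<and>
    (\<forall>g. 0 \<le> phi n (norm_ball n f) g) \<and>
    (\<forall>g. phi n (norm_ball n f) g \<le> B * (\<Sum>i<n. \<bar>g i\<bar>)) \<and>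
    (\<forall>g x. x \<in> norm_ball n f \<longrightarrow> (\<Sum>i<n. g i * x i) \<le> phi n (norm_ball n f) g)"
    using phi_props[OF N] by (elim exE) 
  have B1: "B \<ge> 0" and B2: "\<And>g. bdd_above ((\<lambda>x. \<Sum>i<n. g i * x i) ` norm_ball n f)"
    and B3: "\<And>g. 0 \<le> phi n (norm_ball n f) g"
    and B4: "\<And>g. phi n (norm_ball n f) g \<le> B * (\<Sum>i<n. \<bar>g i\<bar>)"
    using B by simp_all
  obtain T where T: "countable T" "T \<subseteq> norm_ball n f" "norm_ball n f \<subseteq> closure T"
    by (rule separable)
  have Tne: "T \<noteq> {}"
  proof
    assume "T = {}"
    then have "norm_ball n f = {}" using T(3) by simp
    then show False using zero_in_ball[OF N] by simp
  qed
  have bddT: "bdd_above ((\<lambda>x. \<Sum>i<n. g i * x i) ` T)" for g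
    by (rule bdd_above_mono[OF B2]) (use T(2) in auto)
  have eq: "phi n (norm_ball n f) g = (SUP x\<in>T. \<Sum>i<n. g i * x i)" for g
  proof (rule antisym)
    show "phi n (norm_ball n f) g \<le> (SUP x\<in>T. \<Sum>i<n. g i * x i)"
      unfolding phi_def
    proof (rule cSUP_least)
      show "norm_ball n f \<noteq> {}" using zero_in_ball[OF N] by blast
      fix x assume x: "x \<in> norm_ball n f"
      let ?s = "SUP x\<in>T. \<Sum>i<n. g i * x i"
      have "closed {x. (\<Sum>i<n. g i * x i) \<le> ?s}"
        by (rule closed_Collect_le[OF cont_ip continuous_on_const])
      moreover have "T \<subseteq> {x. (\<Sum>i<n. g i * x i) \<le> ?s}"
      proof
        fix y assume "y \<in> T"
        then show "y \<in> {x. (\<Sum>i<n. g i * x i) \<le> ?s}" using cSUP_upper[OF _ bddT] by simp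
      qed
      ultimately have cT: "closure T \<subseteq> {x. (\<Sum>i<n. g i * x i) \<le> ?s}"
        by (rule closure_minimal[rotated])
      have "x \<in> closure T" using T(3) x by (rule subsetD)
      with cT have "x \<in> {x. (\<Sum>i<n. g i * x i) \<le> ?s}" by (rule subsetD)
      then show "(\<Sum>i<n. g i * x i) \<le> ?s" by simp
    qed
    show "(SUP x\<in>T. \<Sum>i<n. g i * x i) \<le> phi n (norm_ball n f) g"
      unfolding phi_def by (rule cSUP_subset_mono[OF Tne B2 T(2) order_refl])
  qed
  have meas: "phi n (norm_ball n f) \<in> borel_measurable (gauss n)"
    unfolding eq[abs_def]
    by (rule borel_measurable_cSUP[OF T(1) meas_ip bddT])
  show ?thesis
  proof (rule Bochner_Integration.integrable_bound[OF _ meas])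
    show "integrable (gauss n) (\<lambda>g. B * (\<Sum>i<n. \<bar>g i\<bar>))" by (rule integrable_mult_right[OF int_G])
    show "AE g in gauss n. norm (phi n (norm_ball n f) g) \<le> norm (B * (\<Sum>i<n. \<bar>g i\<bar>))"
    proof (intro always_eventually allI)
      fix g :: "nat \<Rightarrow> real"
      have "0 \<le> (\<Sum>i<n. \<bar>g i\<bar>)" by (simp add: sum_nonneg)
      then have "0 \<le> B * (\<Sum>i<n. \<bar>g i\<bar>)" using B1 by simp
      then show "norm (phi n (norm_ball n f) g) \<le> norm (B * (\<Sum>i<n. \<bar>g i\<bar>))"
        using B3[of g] B4[of g] by simp
    qed
  qed
qed


lemma reindex_gauss:
  fixes F :: "(nat \<Rightarrow> real) \<Rightarrow> real"
  assumes inj: "inj_on k {..<m}" and kr: "\<And>i. i < m \<Longrightarrow> k i < N"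
    and F: "integrable (gauss m) F"
  shows "integrable (gauss N) (\<lambda>\<omega>. F (\<lambda>i\<in>{..<m}. \<omega> (k i)))"
    and "integral\<^sup>L (gauss N) (\<lambda>\<omega>. F (\<lambda>i\<in>{..<m}. \<omega> (k i))) = integral\<^sup>L (gauss m) F"
proof -
  have d: "distr (gauss N) (gauss m) (\<lambda>\<omega>. \<lambda>i\<in>{..<m}. \<omega> (k i)) = gauss m"
    using distr_PiM_reindex[of "{..<N}" "\<lambda>_. NN" k "{..<m}"] probN inj kr
    unfolding gauss_def by auto
  have meas: "(\<lambda>\<omega>. \<lambda>i\<in>{..<m}. \<omega> (k i)) \<in> measurable (gauss N) (gauss m)"
    unfolding gauss_def
    by (intro measurable_restrict measurable_component_singleton) (use kr in auto)
  have Fm: "F \<in> borel_measurable (gauss m)" using F by (rule borel_measurable_integrable)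
  have Fd: "integrable (distr (gauss N) (gauss m) (\<lambda>\<omega>. \<lambda>i\<in>{..<m}. \<omega> (k i))) F"
    using F d by simp
  show "integrable (gauss N) (\<lambda>\<omega>. F (\<lambda>i\<in>{..<m}. \<omega> (k i)))"
    by (rule Bochner_Integration.integrable_distr[OF meas Fd])
  show "integral\<^sup>L (gauss N) (\<lambda>\<omega>. F (\<lambda>i\<in>{..<m}. \<omega> (k i))) = integral\<^sup>L (gauss m) F"
    using integral_distr[OF meas Fm] d by simp
qed

lemma phi_restrict: "phi n K (\<lambda>i\<in>{..<n}. h i) = phi n K h"
proof -
  have "(\<lambda>x. \<Sum>i<n. (\<lambda>i\<in>{..<n}. h i) i * x i) = (\<lambda>x. \<Sum>i<n. h i * x i)"
    by (auto intro!: sum.cong)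
  then show ?thesis by (simp add: phi_def)
qed

lemma l2_le1:
  assumes "(l2 n a)\<^sup>2 + (l2 m b)\<^sup>2 = 1"
  shows "0 \<le> l2 n a" "l2 n a \<le> 1"
proof -
  show "0 \<le> l2 n a" by (simp add: l2_def sum_nonneg)
  have "(l2 n a)\<^sup>2 \<le> 1\<^sup>2" using assms by (simp add: add_nonneg_eq_0_iff) (metis le_add_same_cancel1 zero_le_power2)
  then have "\<bar>l2 n a\<bar> \<le> \<bar>1\<bar>" by (simp only: abs_le_square_iff)
  then show "l2 n a \<le> 1" by simp
qed

lemma sum_concat:
  "(\<Sum>i<n+m. G i * concat_vec n a b i) = (\<Sum>i<n. G i * a i) + (\<Sum>i<m. G (n+i) * b i)"
proof -
  have "(\<Sum>i<n+m. G i * concat_vec n a b i) = (\<Sum>i<n. G i * concat_vec n a b i) + (\<Sum>i=n..<n+m. G i * concat_vec n a b i)"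
    using sum.atLeastLessThan_concat[of 0 n "n+m" "\<lambda>i. G i * concat_vec n a b i"] by (simp add: atLeast0LessThan)
  also have "(\<Sum>i<n. G i * concat_vec n a b i) = (\<Sum>i<n. G i * a i)"
    by (auto simp: concat_vec_def intro!: sum.cong)
  also have "(\<Sum>i=n..<n+m. G i * concat_vec n a b i) = (\<Sum>i<m. G (n+i) * b i)"
  proof -
    have "(\<Sum>i=n..<n+m. G i * concat_vec n a b i) = (\<Sum>i=0..<m. G (i+n) * concat_vec n a b (i+n))"
      using sum.shift_bounds_nat_ivl[of "\<lambda>i. G i * concat_vec n a b i" 0 n m] by (simp add: add.commute)
    also have "\<dots> = (\<Sum>i<m. G (n+i) * b i)"
      by (auto simp: concat_vec_def atLeast0LessThan add.commute intro!: sum.cong)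
    finally show ?thesis .
  qed
  finally show ?thesis .
qed


lemma phi_le:
  assumes N: "is_norm_on n f" and x: "x \<in> norm_ball n f"
  shows "(\<Sum>i<n. G i * x i) \<le> phi n (norm_ball n f) G"
proof -
  obtain B where B: "B \<ge> 0 \<and>
    (\<forall>g. bdd_above ((\<lambda>x. \<Sum>i<n. g i * x i) ` norm_ball n f)) \<and>
    (\<forall>g. 0 \<le> phi n (norm_ball n f) g) \<and>
    (\<forall>g. phi n (norm_ball n f) g \<le> B * (\<Sum>i<n. \<bar>g i\<bar>)) \<and>
    (\<forall>g x. x \<in> norm_ball n f \<longrightarrow> (\<Sum>i<n. g i * x i) \<le> phi n (norm_ball n f) g)"
    using phi_props[OF N] by (elim exE)
  then show ?thesis using x by simp
qed

lemma phi_nonneg: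
  assumes N: "is_norm_on n f"
  shows "0 \<le> phi n (norm_ball n f) G"
  using phi_le[OF N zero_in_ball[OF N], of G] by simp

lemma scaled_in_ball:
  assumes N: "is_norm_on n f" and a: "a \<in> vecs n" and R: "R > 0" and fa: "f a \<le> R"
  shows "(\<lambda>i. (1 / R) * a i) \<in> norm_ball n f"
proof -
  have "f (\<lambda>i. (1 / R) * a i) = (1 / R) * f a" using norm_props(3)[OF N a, of "1/R"] R by simp
  also have "\<dots> \<le> 1" using fa R by (simp add: divide_le_eq)
  finally show ?thesis using a by (simp add: norm_ball_def vecs_def)
qed

lemma part_bound:
  assumes N: "is_norm_on n f" and a: "a \<in> vecs n" and R: "R > 0" and fa: "f a \<le> R"
  shows "(\<Sum>i<n. G i * a i) \<le> R * phi n (norm_ball n f) G"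
proof -
  have "(\<Sum>i<n. G i * ((1 / R) * a i)) \<le> phi n (norm_ball n f) G"
    by (rule phi_le[OF N scaled_in_ball[OF N a R fa]])
  moreover have "(\<Sum>i<n. G i * ((1 / R) * a i)) = (1 / R) * (\<Sum>i<n. G i * a i)"
    by (simp add: sum_distrib_left algebra_simps)
  ultimately show ?thesis using R by (simp add: divide_le_eq mult.commute)
qed

lemma main_bound:
  assumes C: "C > 0" and Nf: "is_norm_on n f" and Ng: "is_norm_on m g"
    and lp: "lam1 > 0" "lam2 > 0" "ax > 0" "av > 0"
  shows "gaussian_width (n + m) (cone_sphere n m f g C lam1 lam2 ax av)
             \<le> C * ((ax + lam2 * av / lam1) * gaussian_width n (norm_ball n f)
                    + (av + lam1 * ax / lam2) * gaussian_width m (norm_ball m g))"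
proof -
  define K where "K = cone_sphere n m f g C lam1 lam2 ax av"
  define R1 where "R1 = C * (ax + lam2 * av / lam1)"
  define R2 where "R2 = C * (av + lam1 * ax / lam2)"
  define p1 where "p1 = phi n (norm_ball n f)"
  define p2 where "p2 = phi m (norm_ball m g)"
  have R1p: "R1 > 0" unfolding R1_def using C lp by (intro mult_pos_pos add_pos_pos divide_pos_pos) auto
  have R2p: "R2 > 0" unfolding R2_def using C lp by (intro mult_pos_pos add_pos_pos divide_pos_pos) auto
  have wf: "gaussian_width n (norm_ball n f) = integral\<^sup>L (gauss n) p1"
    using zero_in_ball[OF Nf] by (auto simp: gaussian_width_def p1_def phi_def[abs_def])
  have wg: "gaussian_width m (norm_ball m g) = integral\<^sup>L (gauss m) p2"
    using zero_in_ball[OF Ng] by (auto simp: gaussian_width_def p2_def phi_def[abs_def])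
  have I1: "0 \<le> integral\<^sup>L (gauss n) p1"
    by (rule integral_nonneg_AE) (simp add: p1_def phi_nonneg[OF Nf])
  have I2: "0 \<le> integral\<^sup>L (gauss m) p2"
    by (rule integral_nonneg_AE) (simp add: p2_def phi_nonneg[OF Ng])
  have RHS: "C * ((ax + lam2 * av / lam1) * gaussian_width n (norm_ball n f)
                    + (av + lam1 * ax / lam2) * gaussian_width m (norm_ball m g))
           = R1 * integral\<^sup>L (gauss n) p1 + R2 * integral\<^sup>L (gauss m) p2"
    by (simp add: wf wg R1_def R2_def algebra_simps)
  have RHSnn: "0 \<le> R1 * integral\<^sup>L (gauss n) p1 + R2 * integral\<^sup>L (gauss m) p2"
    using R1p R2p I1 I2 by simp
  show ?thesis
  proof (cases "K = {}")
    case True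
    then show ?thesis using RHS RHSnn by (simp add: K_def[symmetric] gaussian_width_def)
  next
    case False
    define h where "h = (\<lambda>G. SUP z\<in>K. \<Sum>i<n+m. G i * z i)"
    have LHS: "gaussian_width (n + m) K = integral\<^sup>L (gauss (n + m)) h"
      using False by (simp add: gaussian_width_def h_def)
    define T1 where "T1 = (\<lambda>\<omega>::nat\<Rightarrow>real. \<lambda>i\<in>{..<n}. \<omega> i)"
    define T2 where "T2 = (\<lambda>\<omega>::nat\<Rightarrow>real. \<lambda>i\<in>{..<m}. \<omega> (n + i))"
    have pt: "h G \<le> R1 * p1 (T1 G) + R2 * p2 (T2 G)" for G
      unfolding h_def
    proof (rule cSUP_least[OF False])
      fix z assume "z \<in> K"
      then obtain a b where ab: "z = concat_vec n a b" "a \<in> vecs n" "b \<in> vecs m"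
        "lam1 * f a + lam2 * g b \<le> C * lam1 * ax * l2 n a + C * lam2 * av * l2 m b"
        "(l2 n a)\<^sup>2 + (l2 m b)\<^sup>2 = 1"
        unfolding K_def cone_sphere_def by blast
      have la: "0 \<le> l2 n a" "l2 n a \<le> 1" using l2_le1[OF ab(5)] by auto
      have ab5': "(l2 m b)\<^sup>2 + (l2 n a)\<^sup>2 = 1" using ab(5) by simp
      have lb: "0 \<le> l2 m b" "l2 m b \<le> 1" using l2_le1[OF ab5'] by auto
      have fa0: "0 \<le> f a" using norm_props(1)[OF Nf ab(2)] .
      have gb0: "0 \<le> g b" using norm_props(1)[OF Ng ab(3)] .
      have t1: "C * lam1 * ax * l2 n a \<le> C * lam1 * ax"
        using la C lp by (simp add: mult_left_le)
      have t2: "C * lam2 * av * l2 m b \<le> C * lam2 * av"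
        using lb C lp by (simp add: mult_left_le)
      have s: "lam1 * f a + lam2 * g b \<le> C * lam1 * ax + C * lam2 * av"
        using ab(4) t1 t2 by linarith
      have "lam1 * f a \<le> lam1 * R1"
      proof -
        have "lam1 * R1 = C * lam1 * ax + C * lam2 * av" using lp by (simp add: R1_def field_simps)
        then show ?thesis using s gb0 lp by (smt (verit) mult_nonneg_nonneg)
      qed
      then have fa: "f a \<le> R1" using lp by simp
      have "lam2 * g b \<le> lam2 * R2"
      proof -
        have "lam2 * R2 = C * lam1 * ax + C * lam2 * av" using lp by (simp add: R2_def field_simps)
        then show ?thesis using s fa0 lp by (smt (verit) mult_nonneg_nonneg)
      qed
      then have gb: "g b \<le> R2" using lp by simp
      have P1: "(\<Sum>i<n. G i * a i) \<le> R1 * p1 (T1 G)"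
      proof -
        have "(\<Sum>i<n. T1 G i * a i) \<le> R1 * p1 (T1 G)"
          unfolding p1_def by (rule part_bound[OF Nf ab(2) R1p fa])
        moreover have "(\<Sum>i<n. T1 G i * a i) = (\<Sum>i<n. G i * a i)"
          by (auto simp: T1_def intro!: sum.cong)
        ultimately show ?thesis by simp
      qed
      have P2: "(\<Sum>i<m. G (n + i) * b i) \<le> R2 * p2 (T2 G)"
      proof -
        have "(\<Sum>i<m. T2 G i * b i) \<le> R2 * p2 (T2 G)"
          unfolding p2_def by (rule part_bound[OF Ng ab(3) R2p gb])
        moreover have "(\<Sum>i<m. T2 G i * b i) = (\<Sum>i<m. G (n + i) * b i)"
          by (auto simp: T2_def intro!: sum.cong)
        ultimately show ?thesis by simp
      qed
      show "(\<Sum>i<n+m. G i * z i) \<le> R1 * p1 (T1 G) + R2 * p2 (T2 G)"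
        using P1 P2 by (simp add: ab(1) sum_concat)
    qed
    have int1: "integrable (gauss n) p1" unfolding p1_def by (rule phi_int[OF Nf])
    have int2: "integrable (gauss m) p2" unfolding p2_def by (rule phi_int[OF Ng])
    have i1: "integrable (gauss (n + m)) (\<lambda>G. p1 (T1 G))"
      and e1: "integral\<^sup>L (gauss (n + m)) (\<lambda>G. p1 (T1 G)) = integral\<^sup>L (gauss n) p1"
      using reindex_gauss[where k="\<lambda>i. i" and m=n and N="n+m", OF _ _ int1]
      by (auto simp: T1_def)
    have i2: "integrable (gauss (n + m)) (\<lambda>G. p2 (T2 G))"
      and e2: "integral\<^sup>L (gauss (n + m)) (\<lambda>G. p2 (T2 G)) = integral\<^sup>L (gauss m) p2"
      using reindex_gauss[where k="\<lambda>i. n + i" and m=m and N="n+m", OF _ _ int2]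
      by (auto simp: T2_def inj_on_def)
    have iR: "integrable (gauss (n + m)) (\<lambda>G. R1 * p1 (T1 G) + R2 * p2 (T2 G))"
      using i1 i2 by (intro Bochner_Integration.integrable_add integrable_mult_right)
    have eR: "integral\<^sup>L (gauss (n + m)) (\<lambda>G. R1 * p1 (T1 G) + R2 * p2 (T2 G))
        = R1 * integral\<^sup>L (gauss n) p1 + R2 * integral\<^sup>L (gauss m) p2"
      using i1 i2 e1 e2 by (simp add: Bochner_Integration.integral_add)
    have "integral\<^sup>L (gauss (n + m)) h \<le> R1 * integral\<^sup>L (gauss n) p1 + R2 * integral\<^sup>L (gauss m) p2"
    proof (cases "integrable (gauss (n + m)) h")
      case True
      have "integral\<^sup>L (gauss (n + m)) h \<le> integral\<^sup>L (gauss (n + m)) (\<lambda>G. R1 * p1 (T1 G) + R2 * p2 (T2 G))"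
        by (rule integral_mono[OF True iR pt])
      then show ?thesis using eR by simp
    next
      case False
      then show ?thesis using RHSnn by (simp add: not_integrable_integral_eq)
    qed
    then show ?thesis using LHS RHS by (simp add: K_def)
  qed
qed

theorem propositionA8:
  fixes C :: real
  assumes "C > 0"
  shows "\<exists>C'::real. \<forall>(n::nat) (m::nat) f g (lam1::real) (lam2::real) (ax::real) (av::real).
           is_norm_on n f \<and> is_norm_on m g \<and>
           lam1 > 0 \<and> lam2 > 0 \<and> ax > 0 \<and> av > 0 \<longrightarrow>
           gaussian_width (n + m) (cone_sphere n m f g C lam1 lam2 ax av)
             \<le> C' * ((ax + lam2 * av / lam1) * gaussian_width n (norm_ball n f)
                    + (av + lam1 * ax / lam2) * gaussian_width m (norm_ball m g))"
  apply (rule exI[of _ C])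
  apply (intro allI impI)
  apply (elim conjE)
  apply (rule main_bound[OF assms])
       apply assumption+
  done

end
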